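(* Let $\mathcal M\subseteq\bigcup_{K\ge1}\mathcal F_K\times\mathcal Q_K$ satisfy: (1) $K(F)<N$ for all $(F,Q)\in\mathcal M$; (2) for every $(F,Q)\in\mathcal M$, $\{F\}\times\mathcal Q_{K(F)}^{\mathrm{an}}\subseteq\mathcal M$. Then $\mathcal M$ is identifiable if and only if (a) for all $(F^1,Q^1),(F^2,Q^2)\in\mathcal M$, $F^1Q^1=F^2Q^2$ implies $\mathrm{co}(F^1)=\mathrm{co}(F^2)$, and (b) for every $(F,Q)\in\mathcal M$, with $K=K(F)$, the vectors $F_{\star 1}-F_{\star K},\dots,F_{\star K-1}-F_{\star K}$ are linearly independent.
   Context: Fix positive integers $M$ and $N$. For a positive integer $K$, $\mathcal F_K$ is the set of real $M\times K$ matrices with all entries in $[0,1]$, and $\mathcal Q_K$ is the set of real $K\times N$ matrices with entries in $[0,1]$ each of whose columns sums to $1$. $K(F)$ is the number of columns of $F$, $A_{\star j}$ the $j$-th column of $A$, $e_k$ the $k$-th standard basis vector. $\mathcal Q_K^{\mathrm{an}}$ is the set of $Q\in\mathcal Q_K$ such that for every $k$ there is $i$ with $Q_{\star i}=e_k$. For a matrix $A$, $\mathrm{co}(A)$ is the convex hull of the columns of $A$. $(F^1,Q^1)\sim(F^2,Q^2)$ means $F^1,F^2$ have the same number $K$ of columns and there is a permutation $\pi$ of $\{1,\dots,K\}$ with $F^2_{sk}=F^1_{s\pi(k)}$ and $Q^2_{ki}=Q^1_{\pi(k)i}$ for all $s,k,i$. $\mathcal M$ is identifiable if for all $(F^1,Q^1),(F^2,Q^2)\in\mathcal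 M$, $F^1Q^1=F^2Q^2$ implies $(F^1,Q^1)\sim(F^2,Q^2)$. *)

theory Defs
  imports "Jordan_Normal_Form.Matrix"
begin

text \<open>Matrices are Jordan_Normal_Form matrices (type real mat), which carry their
dimensions; m and n play the roles of M and N of the paper.\<close>

definition Fset :: "nat \<Rightarrow> nat \<Rightarrow> real mat set" where
  "Fset m K = {F \<in> carrier_mat m K. \<forall>s<m. \<forall>k<K. 0 \<le> F $$ (s,k) \<and> F $$ (s,k) \<le> 1}"

definition Qset :: "nat \<Rightarrow> nat \<Rightarrow> real mat set" where
  "Qset K n = {Q \<in> carrier_mat K n. (\<forall>k<K. \<forall>i<n. 0 \<le> Q $$ (k,i) \<and> Q $$ (k,i) \<le> 1)
      \<and> (\<forall>i<n. (\<Sum>k<K. Q $$ (k,i)) = 1)}"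

definition Qan :: "nat \<Rightarrow> nat \<Rightarrow> real mat set" where
  "Qan K n = {Q \<in> Qset K n. \<forall>k<K. \<exists>i<n. col Q i = unit_vec K k}"

definition co_cols :: "real mat \<Rightarrow> real vec set" where
  "co_cols A = {v. \<exists>(c::nat \<Rightarrow> real). (\<forall>j<dim_col A. 0 \<le> c j) \<and> (\<Sum>j<dim_col A. c j) = 1
      \<and> v = vec (dim_row A) (\<lambda>s. \<Sum>j<dim_col A. c j * (A $$ (s,j)))}"

definition equiv_pair :: "real mat \<times> real mat \<Rightarrow> real mat \<times> real mat \<Rightarrow> bool" where
  "equiv_pair P1 P2 = (case P1 of (F1,Q1) \<Rightarrow> case P2 of (F2,Q2) \<Rightarrow>
     dim_col F1 = dim_col F2 \<and>
     (\<exists>\<pi>. bij_betw \<pi> {..<dim_col F1} {..<dim_col F1} \<and>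
        (\<forall>s<dim_row F1. \<forall>k<dim_col F1. F2 $$ (s,k) = F1 $$ (s, \<pi> k)) \<and>
        (\<forall>k<dim_col F1. \<forall>i<dim_col Q1. Q2 $$ (k,i) = Q1 $$ (\<pi> k, i))))"

definition identifiable :: "(real mat \<times> real mat) set \<Rightarrow> bool" where
  "identifiable MM = (\<forall>P1\<in>MM. \<forall>P2\<in>MM. fst P1 * snd P1 = fst P2 * snd P2 \<longrightarrow> equiv_pair P1 P2)"

text \<open>Linear independence of the family F_{*1}-F_{*K}, ..., F_{*(K-1)}-F_{*K}
  (0-based: columns k < K-1 minus column K-1).\<close>
definition diffs_lin_indep :: "real mat \<Rightarrow> bool" where
  "diffs_lin_indep F = (let K = dim_col F in
     \<forall>(c::nat \<Rightarrow> real). (\<forall>s<dim_row F. (\<Sum>k<K-1. c k * ((F $$ (s,k)) - (F $$ (s,K-1)))) = 0)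
        \<longrightarrow> (\<forall>k<K-1. c k = 0))"

end

theory Submission
  imports Defs
begin

lemma mult_entry:
  fixes A B :: "real mat"
  assumes "A \<in> carrier_mat m K" "B \<in> carrier_mat K n" "s < m" "i < n"
  shows "(A * B) $$ (s,i) = (\<Sum>k<K. A $$ (s,k) * B $$ (k,i))"
  using assms by (auto simp: scalar_prod_def lessThan_atLeast0 intro!: sum.cong)

lemma aff_uniq:
  fixes F :: "real mat"
  assumes ind: "diffs_lin_indep F" and K: "dim_col F = K" "1 \<le> K"
    and eq: "\<forall>s<dim_row F. (\<Sum>l<K. a l * F $$ (s,l)) = (\<Sum>l<K. b l * F $$ (s,l))"
    and sm: "(\<Sum>l<K. a l) = (\<Sum>l<K. b l)"
  shows "\<forall>l<K. a l = b l"
proof -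
  obtain K' where K': "K = Suc K'" using K by (cases K) auto
  define d where "d l = a l - b l" for l
  have sd: "(\<Sum>l<K. d l) = 0" using sm by (simp add: d_def sum_subtractf)
  hence dK: "d K' = - (\<Sum>l<K'. d l)" using K' by simp
  have "\<forall>s<dim_row F. (\<Sum>k<K-1. d k * ((F $$ (s,k)) - (F $$ (s,K-1)))) = 0"
  proof (intro allI impI)
    fix s assume s: "s < dim_row F"
    have "(\<Sum>k<K-1. d k * ((F $$ (s,k)) - (F $$ (s,K-1))))
        = (\<Sum>k<K'. d k * F $$ (s,k)) - (\<Sum>k<K'. d k) * F $$ (s,K')"
      using K' by (simp add: algebra_simps sum_subtractf sum_distrib_right)
    also have "\<dots> = (\<Sum>k<K. d k * F $$ (s,k))" using K' dK by simp
    also have "\<dots> = 0" using eq s by (simp add: d_def algebra_simps sum_subtractf)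
    finally show "(\<Sum>k<K-1. d k * ((F $$ (s,k)) - (F $$ (s,K-1)))) = 0" .
  qed
  hence z: "\<forall>k<K'. d k = 0" using ind K K' unfolding diffs_lin_indep_def Let_def by auto
  hence "d K' = 0" using dK by simp
  with z K' have "\<forall>l<K. d l = 0" using less_Suc_eq by auto
  thus ?thesis by (simp add: d_def)
qed

lemma cols_distinct:
  fixes F :: "real mat"
  assumes ind: "diffs_lin_indep F" and F: "F \<in> carrier_mat m K" and "1 \<le> K"
    and k: "k < K" "k' < K" and e: "\<forall>s<m. F $$ (s,k) = F $$ (s,k')"
  shows "k = k'"
proof -
  have "\<forall>l<K. (if l = k then 1 else 0) = (if l = k' then (1::real) else 0)"
  proof (rule aff_uniq[OF ind])
    show "dim_col F = K" "1 \<le> K" using F assms by auto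
    show "\<forall>s<dim_row F. (\<Sum>l<K. (if l = k then 1 else 0) * F $$ (s,l)) = (\<Sum>l<K. (if l = k' then 1 else 0) * F $$ (s,l))"
      using e k F by (simp add: if_distrib[of "\<lambda>x. x * _"] cong: if_cong)
    show "(\<Sum>l<K. if l = k then 1 else 0) = (\<Sum>l<K. if l = k' then (1::real) else 0)"
      using k by simp
  qed
  thus ?thesis using k by (metis one_neq_zero)
qed


lemma col_in_co:
  fixes F :: "real mat"
  assumes F: "F \<in> carrier_mat m K" and k: "k < K"
  shows "vec m (\<lambda>s. F $$ (s,k)) \<in> co_cols F"
proof -
  have "vec m (\<lambda>s. F $$ (s,k)) = vec m (\<lambda>s. \<Sum>j<K. (if j = k then 1 else 0) * F $$ (s,j))"
    using k by (simp add: if_distrib[of "\<lambda>x. x * _"] cong: if_cong)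
  thus ?thesis unfolding co_cols_def using F k
    by (intro CollectI exI[of _ "\<lambda>j. if j = k then 1 else 0"]) auto
qed

lemma col_match:
  fixes F1 F2 :: "real mat"
  assumes F1: "F1 \<in> carrier_mat m K1" and F2: "F2 \<in> carrier_mat m K2" and K1: "1 \<le> K1"
    and ind: "diffs_lin_indep F1" and co: "co_cols F1 = co_cols F2" and k: "k < K1"
  shows "\<exists>j<K2. \<forall>s<m. F2 $$ (s,j) = F1 $$ (s,k)"
proof -
  have "vec m (\<lambda>s. F1 $$ (s,k)) \<in> co_cols F2" using col_in_co[OF F1 k] co by simp
  then obtain b where b0: "\<forall>j<K2. 0 \<le> b j" and b1: "(\<Sum>j<K2. b j) = 1"
    and bv: "vec m (\<lambda>s. F1 $$ (s,k)) = vec m (\<lambda>s. \<Sum>j<K2. b j * F2 $$ (s,j))"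
    using F2 unfolding co_cols_def by auto
  have be: "\<forall>s<m. F1 $$ (s,k) = (\<Sum>j<K2. b j * F2 $$ (s,j))"
  proof (intro allI impI)
    fix s assume "s < m"
    then show "F1 $$ (s,k) = (\<Sum>j<K2. b j * F2 $$ (s,j))"
      using arg_cong[OF bv, of "\<lambda>v. v $ s"] by simp
  qed
  have "\<forall>j. \<exists>a. j < K2 \<longrightarrow> (\<forall>l<K1. 0 \<le> a l) \<and> (\<Sum>l<K1. a l) = 1 \<and>
        (\<forall>s<m. F2 $$ (s,j) = (\<Sum>l<K1. a l * F1 $$ (s,l)))"
  proof (intro allI)
    fix j
    show "\<exists>a. j < K2 \<longrightarrow> (\<forall>l<K1. 0 \<le> a l) \<and> (\<Sum>l<K1. a l) = 1 \<and>
        (\<forall>s<m. F2 $$ (s,j) = (\<Sum>l<K1. a l * F1 $$ (s,l)))"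
    proof (cases "j < K2")
      case True
      have "vec m (\<lambda>s. F2 $$ (s,j)) \<in> co_cols F1" using col_in_co[OF F2 True] co by simp
      then obtain a where a0: "\<forall>l<K1. 0 \<le> a l" and a1: "(\<Sum>l<K1. a l) = 1"
        and av: "vec m (\<lambda>s. F2 $$ (s,j)) = vec m (\<lambda>s. \<Sum>l<K1. a l * F1 $$ (s,l))"
        using F1 unfolding co_cols_def by auto
      have "\<forall>s<m. F2 $$ (s,j) = (\<Sum>l<K1. a l * F1 $$ (s,l))"
      proof (intro allI impI)
        fix s assume "s < m"
        then show "F2 $$ (s,j) = (\<Sum>l<K1. a l * F1 $$ (s,l))"
          using arg_cong[OF av, of "\<lambda>v. v $ s"] by simp
      qed
      then show ?thesis using a0 a1 by blast
    qed simp
  qed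
  then obtain A where A0: "\<forall>j<K2. \<forall>l<K1. 0 \<le> A j l" and A1: "\<forall>j<K2. (\<Sum>l<K1. A j l) = 1"
    and Ae: "\<forall>j<K2. \<forall>s<m. F2 $$ (s,j) = (\<Sum>l<K1. A j l * F1 $$ (s,l))"
    by metis
  have "\<forall>l<K1. (\<Sum>j<K2. b j * A j l) = (if l = k then 1 else 0)"
  proof (rule aff_uniq[OF ind])
    show "dim_col F1 = K1" "1 \<le> K1" using F1 K1 by auto
    show "\<forall>s<dim_row F1. (\<Sum>l<K1. (\<Sum>j<K2. b j * A j l) * F1 $$ (s,l)) =
        (\<Sum>l<K1. (if l = k then 1 else 0) * F1 $$ (s,l))"
    proof (intro allI impI)
      fix s assume s: "s < dim_row F1"
      have "(\<Sum>l<K1. (\<Sum>j<K2. b j * A j l) * F1 $$ (s,l)) = (\<Sum>j<K2. b j * (\<Sum>l<K1. A j l * F1 $$ (s,l)))"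
        by (simp add: sum_distrib_left sum_distrib_right mult.assoc sum.swap[of _ "{..<K1}"])
      also have "\<dots> = (\<Sum>j<K2. b j * F2 $$ (s,j))" using Ae s F1 by simp
      also have "\<dots> = F1 $$ (s,k)" using be s F1 by simp
      also have "\<dots> = (\<Sum>l<K1. (if l = k then 1 else 0) * F1 $$ (s,l))"
        using k by (simp add: if_distrib[of "\<lambda>x. x * _"] cong: if_cong)
      finally show "(\<Sum>l<K1. (\<Sum>j<K2. b j * A j l) * F1 $$ (s,l)) =
        (\<Sum>l<K1. (if l = k then 1 else 0) * F1 $$ (s,l))" .
    qed
    have "(\<Sum>l<K1. (\<Sum>j<K2. b j * A j l)) = (\<Sum>j<K2. b j * (\<Sum>l<K1. A j l))"
      by (simp add: sum_distrib_left sum.swap[of _ "{..<K1}"])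
    also have "\<dots> = 1" using A1 b1 by simp
    finally show "(\<Sum>l<K1. (\<Sum>j<K2. b j * A j l)) = (\<Sum>l<K1. if l = k then 1 else (0::real))"
      using k by simp
  qed
  note ba = this
  obtain j where j: "j < K2" "b j > 0"
  proof (rule ccontr)
    assume "\<not> thesis"
    hence "\<forall>j<K2. b j \<le> 0" using that by force
    hence "(\<Sum>j<K2. b j) \<le> 0" by (intro sum_nonpos) auto
    with b1 show False by simp
  qed
  have Az: "\<forall>l<K1. l \<noteq> k \<longrightarrow> A j l = 0"
  proof (intro allI impI)
    fix l assume l: "l < K1" "l \<noteq> k"
    have "b j * A j l \<le> (\<Sum>j<K2. b j * A j l)"
      by (rule member_le_sum) (use j l A0 b0 in auto)
    also have "\<dots> = 0" using ba l by simp
    finally have "b j * A j l \<le> 0" .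
    moreover have "0 \<le> A j l" using A0 j l by auto
    ultimately show "A j l = 0" using j(2) by (simp add: mult_le_0_iff)
  qed
  have sA: "\<And>g. (\<Sum>l<K1. A j l * g l) = A j k * g k"
  proof -
    fix g :: "nat \<Rightarrow> real"
    have "(\<Sum>l<K1. A j l * g l) = (\<Sum>l<K1. if l = k then A j k * g k else 0)"
      using Az by (intro sum.cong) auto
    also have "\<dots> = A j k * g k" using k by simp
    finally show "(\<Sum>l<K1. A j l * g l) = A j k * g k" .
  qed
  have "A j k = 1" using sA[of "\<lambda>_. 1"] A1 j by simp
  hence "\<forall>s<m. F2 $$ (s,j) = F1 $$ (s,k)" using Ae j sA by simp
  thus ?thesis using j by blast
qed

lemma co_perm:
  fixes A B :: "real mat"
  assumes bij: "bij_betw \<pi> {..<K} {..<K}" and dA: "dim_col A = K" and dB: "dim_col B = K"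
    and dr: "dim_row A = dim_row B"
    and e: "\<forall>s<dim_row A. \<forall>k<K. B $$ (s,k) = A $$ (s,\<pi> k)"
  shows "co_cols A \<subseteq> co_cols B"
proof
  fix v assume "v \<in> co_cols A"
  then obtain c where c0: "\<forall>j<K. 0 \<le> c j" and c1: "(\<Sum>j<K. c j) = 1"
    and v: "v = vec (dim_row A) (\<lambda>s. \<Sum>j<K. c j * A $$ (s,j))"
    using dA unfolding co_cols_def by auto
  have pi: "\<forall>k<K. \<pi> k < K" using bij bij_betwE by blast
  have r1: "(\<Sum>k<K. c (\<pi> k)) = (\<Sum>j<K. c j)"
    using sum.reindex_bij_betw[OF bij, of c] .
  have r2: "\<forall>s<dim_row A. (\<Sum>k<K. c (\<pi> k) * B $$ (s,k)) = (\<Sum>j<K. c j * A $$ (s,j))"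
  proof (intro allI impI)
    fix s assume s: "s < dim_row A"
    have "(\<Sum>k<K. c (\<pi> k) * B $$ (s,k)) = (\<Sum>k<K. c (\<pi> k) * A $$ (s,\<pi> k))"
      using e s by (intro sum.cong) auto
    also have "\<dots> = (\<Sum>j<K. c j * A $$ (s,j))"
      using sum.reindex_bij_betw[OF bij, of "\<lambda>j. c j * A $$ (s,j)"] .
    finally show "(\<Sum>k<K. c (\<pi> k) * B $$ (s,k)) = (\<Sum>j<K. c j * A $$ (s,j))" .
  qed
  have "v = vec (dim_row B) (\<lambda>s. \<Sum>k<K. c (\<pi> k) * B $$ (s,k))"
    unfolding v using r2 dr by (intro eq_vecI) auto
  thus "v \<in> co_cols B" unfolding co_cols_def using dB c0 c1 r1 pi
    by (intro CollectI exI[of _ "\<lambda>k. c (\<pi> k)"]) auto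
qed


lemma suff:
  fixes MM :: "(real mat \<times> real mat) set"
  assumes mem: "MM \<subseteq> (\<Union>K\<in>{1..}. Fset m K \<times> Qset K n)"
    and ca: "\<forall>(F1,Q1)\<in>MM. \<forall>(F2,Q2)\<in>MM. F1 * Q1 = F2 * Q2 \<longrightarrow> co_cols F1 = co_cols F2"
    and cb: "\<forall>(F,Q)\<in>MM. diffs_lin_indep F"
  shows "identifiable MM"
  unfolding identifiable_def
proof (intro ballI impI)
  fix P1 P2 assume P1: "P1 \<in> MM" and P2: "P2 \<in> MM" and pe: "fst P1 * snd P1 = fst P2 * snd P2"
  obtain F1 Q1 where p1: "P1 = (F1,Q1)" by (cases P1)
  obtain F2 Q2 where p2: "P2 = (F2,Q2)" by (cases P2)
  obtain K1 where K1: "1 \<le> K1" "F1 \<in> Fset m K1" "Q1 \<in> Qset K1 n" using mem P1 p1 by auto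
  obtain K2 where K2: "1 \<le> K2" "F2 \<in> Fset m K2" "Q2 \<in> Qset K2 n" using mem P2 p2 by auto
  have F1c: "F1 \<in> carrier_mat m K1" and F2c: "F2 \<in> carrier_mat m K2"
    and Q1c: "Q1 \<in> carrier_mat K1 n" and Q2c: "Q2 \<in> carrier_mat K2 n"
    and Q1s: "\<forall>i<n. (\<Sum>k<K1. Q1 $$ (k,i)) = 1" and Q2s: "\<forall>i<n. (\<Sum>k<K2. Q2 $$ (k,i)) = 1"
    using K1 K2 by (auto simp: Fset_def Qset_def)
  have eq: "F1 * Q1 = F2 * Q2" using pe p1 p2 by simp
  have co: "co_cols F1 = co_cols F2" using ca P1 P2 p1 p2 eq by fastforce
  have i1: "diffs_lin_indep F1" and i2: "diffs_lin_indep F2" using cb P1 P2 p1 p2 by auto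
  have "\<forall>k. \<exists>j. k < K1 \<longrightarrow> j < K2 \<and> (\<forall>s<m. F2 $$ (s,j) = F1 $$ (s,k))"
    using col_match[OF F1c F2c K1(1) i1 co] by blast
  then obtain f where f: "\<forall>k<K1. f k < K2 \<and> (\<forall>s<m. F2 $$ (s,f k) = F1 $$ (s,k))" by metis
  have "\<forall>k. \<exists>j. k < K2 \<longrightarrow> j < K1 \<and> (\<forall>s<m. F1 $$ (s,j) = F2 $$ (s,k))"
    using col_match[OF F2c F1c K2(1) i2 co[symmetric]] by blast
  then obtain g where g: "\<forall>k<K2. g k < K1 \<and> (\<forall>s<m. F1 $$ (s,g k) = F2 $$ (s,k))" by metis
  have injf: "inj_on f {..<K1}"
  proof (rule inj_onI)
    fix x y assume "x \<in> {..<K1}" "y \<in> {..<K1}" "f x = f y"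
    then have "\<forall>s<m. F1 $$ (s, x) = F1 $$ (s, y)" using f by (metis lessThan_iff)
    then show "x = y" using cols_distinct[OF i1 F1c K1(1), of x y] \<open>x \<in> {..<K1}\<close> \<open>y \<in> {..<K1}\<close> by auto
  qed
  have injg: "inj_on g {..<K2}"
  proof (rule inj_onI)
    fix x y assume "x \<in> {..<K2}" "y \<in> {..<K2}" "g x = g y"
    then have "\<forall>s<m. F2 $$ (s, x) = F2 $$ (s, y)" using g by (metis lessThan_iff)
    then show "x = y" using cols_distinct[OF i2 F2c K2(1), of x y] \<open>x \<in> {..<K2}\<close> \<open>y \<in> {..<K2}\<close> by auto
  qed
  have "K1 \<le> K2" using card_inj_on_le[OF injf, of "{..<K2}"] f by auto
  moreover have "K2 \<le> K1" using card_inj_on_le[OF injg, of "{..<K1}"] g by auto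
  ultimately have KK: "K1 = K2" by simp
  have bij: "bij_betw g {..<K2} {..<K2}"
    unfolding bij_betw_def using injg endo_inj_surj[OF _ _ injg] g KK by auto
  have Qeq: "\<forall>k<K2. \<forall>i<n. Q2 $$ (k,i) = Q1 $$ (g k, i)"
  proof (intro allI impI)
    fix k i assume k: "k < K2" and i: "i < n"
    have "\<forall>l<K2. Q1 $$ (g l, i) = Q2 $$ (l,i)"
    proof (rule aff_uniq[OF i2])
      show "dim_col F2 = K2" "1 \<le> K2" using F2c K2 by auto
      show "\<forall>s<dim_row F2. (\<Sum>l<K2. Q1 $$ (g l, i) * F2 $$ (s,l)) = (\<Sum>l<K2. Q2 $$ (l,i) * F2 $$ (s,l))"
      proof (intro allI impI)
        fix s assume s: "s < dim_row F2"
        hence s': "s < m" using F2c by auto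
        have "(\<Sum>l<K2. Q1 $$ (g l, i) * F2 $$ (s,l)) = (\<Sum>l<K2. F1 $$ (s, g l) * Q1 $$ (g l, i))"
          using g s' by (intro sum.cong) auto
        also have "\<dots> = (\<Sum>l<K1. F1 $$ (s, l) * Q1 $$ (l, i))"
          using sum.reindex_bij_betw[OF bij, of "\<lambda>l. F1 $$ (s, l) * Q1 $$ (l, i)"] KK by simp
        also have "\<dots> = (F1 * Q1) $$ (s,i)" using mult_entry[OF F1c Q1c s' i] by simp
        also have "\<dots> = (F2 * Q2) $$ (s,i)" using eq by simp
        also have "\<dots> = (\<Sum>l<K2. Q2 $$ (l,i) * F2 $$ (s,l))"
          using mult_entry[OF F2c Q2c s' i] by (simp add: mult.commute)
        finally show "(\<Sum>l<K2. Q1 $$ (g l, i) * F2 $$ (s,l)) = (\<Sum>l<K2. Q2 $$ (l,i) * F2 $$ (s,l))" .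
      qed
      have "(\<Sum>l<K2. Q1 $$ (g l, i)) = (\<Sum>l<K1. Q1 $$ (l, i))"
        using sum.reindex_bij_betw[OF bij, of "\<lambda>l. Q1 $$ (l, i)"] KK by simp
      also have "\<dots> = 1" using Q1s i by simp
      also have "\<dots> = (\<Sum>l<K2. Q2 $$ (l,i))" using Q2s i by simp
      finally show "(\<Sum>l<K2. Q1 $$ (g l, i)) = (\<Sum>l<K2. Q2 $$ (l,i))" .
    qed
    then show "Q2 $$ (k,i) = Q1 $$ (g k, i)" using k by simp
  qed
  show "equiv_pair P1 P2"
    unfolding p1 p2 equiv_pair_def using F1c F2c Q1c KK bij g Qeq
    by (auto intro!: exI[of _ g])
qed


lemma nec_b:
  fixes F :: "real mat" and MM :: "(real mat \<times> real mat) set"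
  assumes Fc: "F \<in> carrier_mat m K" and Kn: "K < n"
    and cl: "\<forall>Q'\<in>Qan K n. (F,Q') \<in> MM" and idf: "identifiable MM"
  shows "diffs_lin_indep F"
proof (rule ccontr)
  assume "\<not> diffs_lin_indep F"
  then obtain c k0 where ce: "\<forall>s<m. (\<Sum>k<K-1. c k * ((F $$ (s,k)) - (F $$ (s,K-1)))) = 0"
    and k0: "k0 < K-1" "c k0 \<noteq> 0"
    using Fc unfolding diffs_lin_indep_def Let_def by auto
  obtain K' where K': "K = Suc K'" using k0 by (cases K) auto
  define d where "d k = (if k < K' then c k else - (\<Sum>j<K'. c j))" for k
  have sd: "(\<Sum>k<K. d k) = 0" using K' by (simp add: d_def)
  have Fd: "\<forall>s<m. (\<Sum>k<K. d k * F $$ (s,k)) = 0"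
  proof (intro allI impI)
    fix s assume s: "s < m"
    have "(\<Sum>k<K. d k * F $$ (s,k)) = (\<Sum>k<K'. c k * F $$ (s,k)) - (\<Sum>j<K'. c j) * F $$ (s,K')"
      using K' by (simp add: d_def)
    also have "\<dots> = (\<Sum>k<K-1. c k * ((F $$ (s,k)) - (F $$ (s,K-1))))"
      using K' by (simp add: algebra_simps sum_subtractf sum_distrib_right)
    also have "\<dots> = 0" using ce s by simp
    finally show "(\<Sum>k<K. d k * F $$ (s,k)) = 0" .
  qed
  have dk0: "d k0 \<noteq> 0" "k0 < K" using k0 K' by (auto simp: d_def)
  define dp where "dp k = max (d k) 0" for k
  define dm where "dm k = max (- d k) 0" for k
  have dpm: "\<And>k. d k = dp k - dm k" by (simp add: dp_def dm_def max_def)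
  have dp0: "\<And>k. 0 \<le> dp k" and dm0: "\<And>k. 0 \<le> dm k" by (auto simp: dp_def dm_def)
  define S where "S = (\<Sum>k<K. dp k)"
  have SM: "(\<Sum>k<K. dm k) = S"
  proof -
    have "(\<Sum>k<K. dp k) - (\<Sum>k<K. dm k) = 0" using sd by (simp add: dpm sum_subtractf)
    thus ?thesis by (simp add: S_def)
  qed
  have dple: "\<And>k. k < K \<Longrightarrow> dp k \<le> S" unfolding S_def
    by (rule member_le_sum) (auto simp: dp0)
  have dmle: "\<And>k. k < K \<Longrightarrow> dm k \<le> S" unfolding SM[symmetric]
    by (rule member_le_sum) (auto simp: dm0)
  have Spos: "S > 0"
  proof (cases "d k0 > 0")
    case True
    then have "dp k0 > 0" by (simp add: dp_def)
    then show ?thesis using dple[OF dk0(2)] by simp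
  next
    case False
    then have "dm k0 > 0" using dk0 by (simp add: dm_def)
    then show ?thesis using dmle[OF dk0(2)] by simp
  qed
  define v where "v k = dp k / S" for k
  define w where "w k = dm k / S" for k
  have v01: "\<And>k. k < K \<Longrightarrow> 0 \<le> v k \<and> v k \<le> 1" using dple dp0 Spos by (simp add: v_def)
  have w01: "\<And>k. k < K \<Longrightarrow> 0 \<le> w k \<and> w k \<le> 1" using dmle dm0 Spos by (simp add: w_def)
  have vs: "(\<Sum>k<K. v k) = 1" using Spos by (simp add: v_def S_def[symmetric] sum_divide_distrib[symmetric])
  have ws: "(\<Sum>k<K. w k) = 1" using Spos SM by (simp add: w_def sum_divide_distrib[symmetric])
  have Fvw: "\<forall>s<m. (\<Sum>k<K. F $$ (s,k) * v k) = (\<Sum>k<K. F $$ (s,k) * w k)"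
  proof (intro allI impI)
    fix s assume s: "s < m"
    have "(\<Sum>k<K. F $$ (s,k) * v k) - (\<Sum>k<K. F $$ (s,k) * w k) = (\<Sum>k<K. d k * F $$ (s,k)) / S"
      by (simp add: v_def w_def dpm sum_subtractf sum_divide_distrib algebra_simps diff_divide_distrib)
    also have "\<dots> = 0" using Fd s by simp
    finally show "(\<Sum>k<K. F $$ (s,k) * v k) = (\<Sum>k<K. F $$ (s,k) * w k)" by simp
  qed
  define Q1 where "Q1 = mat K n (\<lambda>(k,i). if i < K then (if k = i then 1 else 0) else v k)"
  define Q2 where "Q2 = mat K n (\<lambda>(k,i). if i < K then (if k = i then 1 else 0) else w k)"
  have anch: "\<And>u. (\<forall>k<K. 0 \<le> u k \<and> u k \<le> 1) \<Longrightarrow> (\<Sum>k<K. u k) = 1 \<Longrightarrow>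
      mat K n (\<lambda>(k,i). if i < K then (if k = i then 1 else 0) else u k) \<in> Qan K n"
  proof -
    fix u :: "nat \<Rightarrow> real" assume u01: "\<forall>k<K. 0 \<le> u k \<and> u k \<le> 1" and us: "(\<Sum>k<K. u k) = 1"
    let ?Q = "mat K n (\<lambda>(k,i). if i < K then (if k = i then 1 else 0) else u k) :: real mat"
    have "\<And>i. (\<Sum>k<K. if i < K then if k = i then 1 else 0 else u k) = (1::real)"
      using us by (case_tac "i < K") auto
    then have "?Q \<in> Qset K n" unfolding Qset_def using u01 us by auto
    moreover have "\<forall>k<K. \<exists>i<n. col ?Q i = unit_vec K k"
    proof (intro allI impI)
      fix k assume k: "k < K"
      have "col ?Q k = unit_vec K k" using k Kn by (intro eq_vecI) (auto simp: unit_vec_def)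
      then show "\<exists>i<n. col ?Q i = unit_vec K k" using k Kn by (intro exI[of _ k]) auto
    qed
    ultimately show "?Q \<in> Qan K n" unfolding Qan_def by auto
  qed
  have Q1a: "Q1 \<in> Qan K n" unfolding Q1_def by (rule anch) (use v01 vs in auto)
  have Q2a: "Q2 \<in> Qan K n" unfolding Q2_def by (rule anch) (use w01 ws in auto)
  have Q1c: "Q1 \<in> carrier_mat K n" and Q2c: "Q2 \<in> carrier_mat K n" by (auto simp: Q1_def Q2_def)
  have prod: "F * Q1 = F * Q2"
  proof (rule eq_matI)
    fix s i assume "s < dim_row (F * Q2)" "i < dim_col (F * Q2)"
    hence s: "s < m" and i: "i < n" using Fc Q2c by auto
    show "(F * Q1) $$ (s,i) = (F * Q2) $$ (s,i)"
      unfolding mult_entry[OF Fc Q1c s i] mult_entry[OF Fc Q2c s i]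
      using Fvw s i by (cases "i < K") (auto simp: Q1_def Q2_def intro!: sum.cong)
  qed (use Fc Q1c Q2c in auto)
  have "equiv_pair (F,Q1) (F,Q2)" using idf cl Q1a Q2a prod unfolding identifiable_def by auto
  then obtain \<pi> where pi: "bij_betw \<pi> {..<K} {..<K}"
    and pq: "\<forall>k<K. \<forall>i<n. Q2 $$ (k,i) = Q1 $$ (\<pi> k, i)"
    using Fc Q1c unfolding equiv_pair_def by auto
  have "\<forall>k<K. v k = w k"
  proof (intro allI impI)
    fix k assume k: "k < K"
    have pk: "\<pi> k < K" using pi k bij_betwE by blast
    have "Q2 $$ (k,k) = Q1 $$ (\<pi> k, k)" using pq k Kn by auto
    hence "\<pi> k = k" using k pk Kn by (auto simp: Q1_def Q2_def split: if_splits)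
    moreover have "Q2 $$ (k,K) = Q1 $$ (\<pi> k, K)" using pq k Kn by auto
    ultimately show "v k = w k" using k pk Kn by (simp add: Q1_def Q2_def)
  qed
  hence "dp k0 = dm k0" using dk0 Spos by (simp add: v_def w_def)
  thus False using dk0 by (simp add: dp_def dm_def max_def split: if_splits)
qed

theorem mainTheorem5:
  fixes m n :: nat and MM :: "(real mat \<times> real mat) set"
  assumes "0 < m" and "0 < n"
    and "MM \<subseteq> (\<Union>K\<in>{1..}. Fset m K \<times> Qset K n)"
    and "\<forall>(F,Q)\<in>MM. dim_col F < n"
    and "\<forall>(F,Q)\<in>MM. \<forall>Q'\<in>Qan (dim_col F) n. (F,Q') \<in> MM"
  shows "identifiable MM \<longleftrightarrow>
     ((\<forall>(F1,Q1)\<in>MM. \<forall>(F2,Q2)\<in>MM. F1 * Q1 = F2 * Q2 \<longrightarrow> co_cols F1 = co_cols F2) \<and>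
      (\<forall>(F,Q)\<in>MM. diffs_lin_indep F))"
proof
  assume idf: "identifiable MM"
  have A: "\<forall>(F1,Q1)\<in>MM. \<forall>(F2,Q2)\<in>MM. F1 * Q1 = F2 * Q2 \<longrightarrow> co_cols F1 = co_cols F2"
  proof (intro ballI, clarify)
    fix F1 Q1 F2 Q2 assume P1: "(F1,Q1) \<in> MM" and P2: "(F2,Q2) \<in> MM" and e: "F1 * Q1 = F2 * Q2"
    obtain K1 where K1: "F1 \<in> Fset m K1" using assms(3) P1 by auto
    obtain K2 where K2: "F2 \<in> Fset m K2" using assms(3) P2 by auto
    have F1c: "F1 \<in> carrier_mat m K1" and F2c: "F2 \<in> carrier_mat m K2"
      using K1 K2 by (auto simp: Fset_def)
    have "equiv_pair (F1,Q1) (F2,Q2)" using idf P1 P2 e unfolding identifiable_def by auto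
    then obtain \<pi> where KK: "K1 = K2" and pi: "bij_betw \<pi> {..<K1} {..<K1}"
      and fe: "\<forall>s<m. \<forall>k<K1. F2 $$ (s,k) = F1 $$ (s, \<pi> k)"
      using F1c F2c unfolding equiv_pair_def by auto
    have s1: "co_cols F1 \<subseteq> co_cols F2"
      by (rule co_perm[OF pi]) (use F1c F2c KK fe in auto)
    define h where "h = inv_into {..<K1} \<pi>"
    have hb: "bij_betw h {..<K1} {..<K1}" unfolding h_def by (rule bij_betw_inv_into[OF pi])
    have "\<forall>s<m. \<forall>k<K1. F1 $$ (s,k) = F2 $$ (s, h k)"
    proof (intro allI impI)
      fix s k assume s: "s < m" and k: "k < K1"
      have hk: "h k < K1" using hb k bij_betwE by blast
      have "\<pi> (h k) = k" unfolding h_def using pi k by (simp add: bij_betw_inv_into_right)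
      then show "F1 $$ (s,k) = F2 $$ (s, h k)" using fe s hk by metis
    qed
    hence s2: "co_cols F2 \<subseteq> co_cols F1"
      by (intro co_perm[OF hb]) (use F1c F2c KK in auto)
    show "co_cols F1 = co_cols F2" using s1 s2 by auto
  qed
  have B: "\<forall>(F,Q)\<in>MM. diffs_lin_indep F"
  proof (intro ballI, clarify)
    fix F Q assume P: "(F,Q) \<in> MM"
    obtain K where K: "F \<in> Fset m K" using assms(3) P by auto
    have Fc: "F \<in> carrier_mat m K" using K by (auto simp: Fset_def)
    show "diffs_lin_indep F"
    proof (rule nec_b[OF Fc _ _ idf])
      show "K < n" using assms(4) P Fc by auto
      show "\<forall>Q'\<in>Qan K n. (F, Q') \<in> MM" using assms(5) P Fc by auto
    qed
  qed
  show "(\<forall>(F1,Q1)\<in>MM. \<forall>(F2,Q2)\<in>MM. F1 * Q1 = F2 * Q2 \<longrightarrow> co_cols F1 = co_cols F2) \<and>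
      (\<forall>(F,Q)\<in>MM. diffs_lin_indep F)" using A B by blast
next
  assume "(\<forall>(F1,Q1)\<in>MM. \<forall>(F2,Q2)\<in>MM. F1 * Q1 = F2 * Q2 \<longrightarrow> co_cols F1 = co_cols F2) \<and>
      (\<forall>(F,Q)\<in>MM. diffs_lin_indep F)"
  then show "identifiable MM" using suff[OF assms(3)] by blast
qed

end
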